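(* For the merging problem with $n$ items and $k$ slots, let $0<\epsilon<1$ and suppose $n\ge k^2/\epsilon+k$ and the ad values $a_1,\dots,a_n$ are i.i.d. with a common (regular) distribution supported on $[0,\infty)$, and $o_i\ge0$. Then the G-FIX mechanism is $(1-\epsilon)$-approximate: $\mathrm{OBJ}(\mathcal M^F)\ge(1-\epsilon)\mathrm{OBJ}(\mathcal M^* )$.
   Context: Merging problem: $n$ items indexed by $[n]$, $k\le n$ slots. Each item $i$ has a random ad value $a_i$, drawn independently from a regular distribution $G_i$ ($\boldsymbol a\sim G=\times_i G_i$), and a fixed organic value $o_i\ge0$. A mechanism is a pair of allocation rules $x,y$ with $x_i(\boldsymbol a),y_i(\boldsymbol a)\in\{0,1\}$ ($x_i=1$: item $i$ shown as ad; $y_i=1$: shown organically) satisfying for all $\boldsymbol a,i$: (i) $\sum_i(x_i+y_i)\le k$; (ii) $x_i+y_i\le 1$; (iii) $y_i(a_i,\boldsymbol a_{-i})$ independent of $a_i$; (iv) $x_i(a_i,\boldsymbol a_{-i})$ non-decreasing in $a_i$. Objective $\mathrm{OBJ}=\mathbb E_{\boldsymbol a\sim G}[\sum_i(a_ix_i(\boldsymbol a)+o_iy_i(\boldsymbol a))]$; $\mathcal M^*$ maximizes it subject to (i)–(iv). A mechanism $\mathcal M$ is $\tau$-approximate if $\mathrm{OBJ}(\mathcal M)/\mathrm{OBJ}(\mathcal M^* )\ge\tau$. Notation: for a finite multiset $S$ of reals and $k\le|S|$, $\max^{(k)}S$ is the sum of the $k$ largest elements of $S$. G-FIX-$I$ mechanism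 $\mathcal M^F_I$ for $I\subseteq[n]$: items in $I$ may only be shown in organic form and items outside $I$ only as ads; with $L=\{o_i:i\in I\}\cup\{a_i:i\in[n]\setminus I\}$, it displays (in the designated forms) the $k$ items with the largest values in $L$. Its objective is $\mathrm{OBJ}(\mathcal M_I^F)=\mathbb E_{\boldsymbol a\sim G}[\max^{(k)}L]$. The G-FIX mechanism $\mathcal M^F$ runs the $\mathcal M^F_I$ with the highest objective among all $I\subseteq[n]$ with $|I|\le k$, so $\mathrm{OBJ}(\mathcal M^F)=\max_{I\subseteq[n],|I|\le k}\mathrm{OBJ}(\mathcal M^F_I)$. *)

theory Defs
  imports "HOL-Analysis.Analysis" "HOL-Probability.Probability" "HOL-Library.Multiset"
begin

text \<open>Items are indexed by 0..<n; an ad-value profile is a function nat => real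
  (only the values at i < n matter).  All ad values are i.i.d. with law D.\<close>

definition regular_dist :: "real measure \<Rightarrow> bool" where
  "regular_dist D \<longleftrightarrow>
     (\<exists>f. f \<in> borel_measurable borel \<and> (\<forall>x. 0 \<le> f x) \<and>
          D = density lborel (\<lambda>x. ennreal (f x)) \<and>
          mono_on {x. 0 < f x} (\<lambda>v. v - (1 - measure D {..v}) / f v))"

definition prof_dist :: "real measure \<Rightarrow> nat \<Rightarrow> (nat \<Rightarrow> real) measure" where
  "prof_dist D n = PiM {..<n} (\<lambda>_. D)"

text \<open>Feasibility constraints (i)-(iv) of a mechanism (x, y).\<close>
definition feasible_mech ::
  "nat \<Rightarrow> nat \<Rightarrow> ((nat \<Rightarrow> real) \<Rightarrow> nat \<Rightarrow> bool) \<Rightarrow> ((nat \<Rightarrow> real) \<Rightarrow> nat \<Rightarrow> bool) \<Rightarrow> bool" where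
  "feasible_mech n k x y \<longleftrightarrow>
     (\<forall>a \<in> PiE {..<n} (\<lambda>_. UNIV).
        (\<Sum>i<n. of_bool (x a i) + of_bool (y a i)) \<le> (k::nat) \<and>
        (\<forall>i<n. of_bool (x a i) + of_bool (y a i) \<le> (1::nat)) \<and>
        (\<forall>i<n. \<forall>s t. y (a(i := s)) i = y (a(i := t)) i) \<and>
        (\<forall>i<n. \<forall>s t. s \<le> t \<longrightarrow> x (a(i := s)) i \<longrightarrow> x (a(i := t)) i))"

definition mech_obj ::
  "real measure \<Rightarrow> nat \<Rightarrow> (nat \<Rightarrow> real) \<Rightarrow> ((nat \<Rightarrow> real) \<Rightarrow> nat \<Rightarrow> bool) \<Rightarrow> ((nat \<Rightarrow> real) \<Rightarrow> nat \<Rightarrow> bool) \<Rightarrow> ennreal" where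
  "mech_obj D n ov x y =
     (\<integral>\<^sup>+ a. ennreal (\<Sum>i<n. (if x a i then a i else 0) + (if y a i then ov i else 0)) \<partial>prof_dist D n)"

definition opt_obj :: "real measure \<Rightarrow> nat \<Rightarrow> nat \<Rightarrow> (nat \<Rightarrow> real) \<Rightarrow> ennreal" where
  "opt_obj D n k ov = (SUP xy \<in> {(x, y). feasible_mech n k x y}. mech_obj D n ov (fst xy) (snd xy))"

definition max_k :: "nat \<Rightarrow> real multiset \<Rightarrow> real" where
  "max_k k S = sum_list (take k (rev (sorted_list_of_multiset S)))"

definition fix_obj :: "real measure \<Rightarrow> nat \<Rightarrow> nat \<Rightarrow> (nat \<Rightarrow> real) \<Rightarrow> nat set \<Rightarrow> ennreal" where
  "fix_obj D n k ov I =
     (\<integral>\<^sup>+ a. ennreal (max_k k (image_mset (\<lambda>i. if i \<in> I then ov i else a i) (mset_set {..<n})))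
       \<partial>prof_dist D n)"

definition gfix_obj :: "real measure \<Rightarrow> nat \<Rightarrow> nat \<Rightarrow> (nat \<Rightarrow> real) \<Rightarrow> ennreal" where
  "gfix_obj D n k ov = Max {fix_obj D n k ov I | I. I \<subseteq> {..<n} \<and> card I \<le> k}"

end

theory Submission
  imports Defs
begin


lemma take_sum_ge:
  fixes xs :: "real list"
  assumes "sorted_wrt (\<ge>) xs" "N \<subseteq># mset xs" "size N \<le> k" "\<forall>x\<in>set xs. 0 \<le> x"
  shows "sum_mset N \<le> sum_list (take k xs)"
  using assms
proof (induction xs arbitrary: N k)
  case Nil
  then show ?case by simp
next
  case (Cons x xs)
  show ?case
  proof (cases k)
    case 0
    then show ?thesis using Cons.prems by simp
  next
    case (Suc k')
    show ?thesis
    proof (cases "x \<in># N")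
      case True
      define N' where "N' = N - {#x#}"
      have N: "N = add_mset x N'" using True by (simp add: N'_def)
      have "N' \<subseteq># mset xs" using Cons.prems(2) N by simp
      moreover have "size N' \<le> k'" using Cons.prems(3) N Suc by simp
      ultimately have "sum_mset N' \<le> sum_list (take k' xs)"
        using Cons.IH Cons.prems by auto
      then show ?thesis using N Suc by simp
    next
      case False
      have sub: "N \<subseteq># mset xs" using Cons.prems(2) False
        unfolding subseteq_mset_def mset.simps(2)
        by (metis count_add_mset count_eq_zero_iff le_SucE zero_le)
      show ?thesis
      proof (cases "N = {#}")
        case True
        have "0 \<le> sum_list (take k (x # xs))"
          using Cons.prems(4) by (intro sum_list_nonneg) (meson in_set_takeD)
        then show ?thesis using True by simp
      next
        case False
        then obtain y N' where N: "N = add_mset y N'" by (metis multiset_cases)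
        have "y \<in> set xs" using sub N by (metis insert_subset_eq_iff mset_subset_eq_insertD set_mset_mset)
        then have yx: "y \<le> x" using Cons.prems(1) by auto
        have "N' \<subseteq># mset xs" using sub N by (metis add_mset_add_single mset_subset_eq_add_left subset_mset.order_trans)
        moreover have "size N' \<le> k'" using Cons.prems(3) N Suc by simp
        ultimately have "sum_mset N' \<le> sum_list (take k' xs)"
          using Cons.IH Cons.prems by auto
        then show ?thesis using N Suc yx by simp
      qed
    qed
  qed
qed

lemma max_k_ge:
  fixes g :: "nat \<Rightarrow> real"
  assumes "finite J" "S \<subseteq> J" "card S \<le> k" "\<forall>i\<in>J. 0 \<le> g i"
  shows "sum g S \<le> max_k k (image_mset g (mset_set J))"
proof -
  define M where "M = image_mset g (mset_set J)"
  define xs where "xs = rev (sorted_list_of_multiset M)"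
  have s: "sorted_wrt (\<ge>) xs" unfolding xs_def sorted_wrt_rev
    using sorted_sorted_list_of_multiset by (simp add: sorted_wrt_iff_nth_less)
  have m: "mset xs = M" by (simp add: xs_def)
  have "image_mset g (mset_set S) \<subseteq># M" unfolding M_def
    by (intro image_mset_subseteq_mono) (metis assms(1,2) finite_subset mset_set_set_mset_msubset subset_mset.eq_iff msubset_mset_set_iff)
  moreover have "\<forall>x\<in>set xs. 0 \<le> x" using assms(4) m M_def
    by (metis (no_types, lifting) assms(1) finite_set_mset_mset_set image_iff set_image_mset set_mset_mset)
  ultimately have "sum_mset (image_mset g (mset_set S)) \<le> sum_list (take k xs)"
    using take_sum_ge[OF s] m assms(3) by simp
  then show ?thesis by (simp add: max_k_def xs_def M_def sum_unfold_sum_mset)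
qed

lemma top_set:
  fixes ov :: "nat \<Rightarrow> real"
  assumes "j \<le> n"
  shows "\<exists>T \<subseteq> {..<n}. card T = j \<and> (\<forall>t\<in>T. \<forall>u\<in>{..<n}-T. ov u \<le> ov t)"
  using assms
proof (induction j)
  case 0
  then show ?case by auto
next
  case (Suc j)
  then obtain T where T: "T \<subseteq> {..<n}" "card T = j" "\<forall>t\<in>T. \<forall>u\<in>{..<n}-T. ov u \<le> ov t"
    by auto
  have fin: "finite ({..<n} - T)" by simp
  have "card ({..<n} - T) = n - j" using T by (simp add: card_Diff_subset finite_subset)
  then have "card ({..<n} - T) > 0" using Suc.prems by simp
  then have ne: "{..<n} - T \<noteq> {}" by (metis card.empty less_irrefl)
  obtain u0 where u0: "u0 \<in> {..<n} - T" "ov u0 = Max (ov ` ({..<n} - T))"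
  proof -
    have "Max (ov ` ({..<n} - T)) \<in> ov ` ({..<n} - T)" using fin ne by (intro Max_in) auto
    then show ?thesis using that by force
  qed
  have mx: "\<forall>u\<in>{..<n}-T. ov u \<le> ov u0" using u0 fin by auto
  show ?case
  proof (intro exI[of _ "insert u0 T"] conjI)
    show "insert u0 T \<subseteq> {..<n}" using T u0 by auto
    show "card (insert u0 T) = Suc j" using T u0 by (simp add: finite_subset)
    show "\<forall>t\<in>insert u0 T. \<forall>u\<in>{..<n} - insert u0 T. ov u \<le> ov t"
      using T mx by auto
  qed
qed

lemma exch:
  fixes ov :: "nat \<Rightarrow> real"
  assumes T: "T \<subseteq> {..<n}" "card T = k" "\<forall>t\<in>T. \<forall>u\<in>{..<n}-T. ov u \<le> ov t"
  shows "Y \<subseteq> {..<n} \<Longrightarrow> card Y \<le> k \<Longrightarrow> d = card (Y - T) \<Longrightarrow>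
    \<exists>Y'\<subseteq>T. card Y' \<le> card Y \<and> sum ov Y \<le> sum ov Y'"
proof (induction d arbitrary: Y)
  case 0
  have "finite Y" using 0 finite_subset by blast
  then have "Y - T = {}" using 0 by simp
  then have "Y \<subseteq> T" by blast
  then show ?case by blast
next
  case (Suc d)
  have fY: "finite Y" using Suc.prems(1) finite_subset by blast
  have fT: "finite T" using T(1) finite_subset by blast
  have "Y - T \<noteq> {}" using Suc.prems(3) by (metis card.empty nat.distinct(1))
  then obtain y where y: "y \<in> Y" "y \<notin> T" by blast
  have "\<not> T \<subseteq> Y"
  proof
    assume TY: "T \<subseteq> Y"
    have "card T \<le> card Y" using TY fY by (rule card_mono[rotated])
    then have "card T = card Y" using Suc.prems(2) T(2) by simp
    then have "T = Y" using card_subset_eq[OF fY TY] by simp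
    then show False using y by blast
  qed
  then obtain t where t: "t \<in> T" "t \<notin> Y" by blast
  define Y2 where "Y2 = insert t (Y - {y})"
  have fY': "finite (Y - {y})" using fY by blast
  have "card Y2 = Suc (card (Y - {y}))" unfolding Y2_def using t fY' by (simp add: card_insert_if)
  moreover have "card Y = Suc (card (Y - {y}))" using fY y(1) by (rule card.remove)
  ultimately have cY2: "card Y2 = card Y" by simp
  have "Y2 - T = (Y - T) - {y}" using t unfolding Y2_def by blast
  moreover have "card ((Y - T) - {y}) = card (Y - T) - 1" using y fY by (simp add: card_Diff_singleton_if)
  ultimately have dY2: "d = card (Y2 - T)" using Suc.prems(3) by simp
  have sY2: "sum ov Y \<le> sum ov Y2"
  proof -
    have "ov y \<le> ov t" using T(3) t y Suc.prems(1) by blast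
    moreover have "sum ov Y = ov y + sum ov (Y - {y})" using fY y(1) by (rule sum.remove)
    moreover have "sum ov Y2 = ov t + sum ov (Y - {y})" using fY' t unfolding Y2_def by simp
    ultimately show ?thesis by simp
  qed
  have "Y2 \<subseteq> {..<n}" using Suc.prems(1) T(1) t unfolding Y2_def by blast
  then obtain Y' where "Y' \<subseteq> T" "card Y' \<le> card Y2" "sum ov Y2 \<le> sum ov Y'"
    using Suc.IH[OF _ _ dY2] cY2 Suc.prems(2) by auto
  then show ?case using cY2 sY2 by auto
qed
lemma blk: "(k::nat) > 0 \<Longrightarrow> i \<in> {r*k..<r*k+k} \<Longrightarrow> i div k = r"
  by (intro div_nat_eqI) (auto simp: algebra_simps)




theorem theorem4:
  fixes D :: "real measure" and n k :: nat and \<epsilon> :: real and ov :: "nat \<Rightarrow> real"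
  assumes "prob_space D"
    and "sets D = sets borel"
    and "AE v in D. 0 \<le> v"
    and "regular_dist D"
    and "k \<le> n"
    and "0 < \<epsilon>" and "\<epsilon> < 1"
    and "real n \<ge> (real k)^2 / \<epsilon> + real k"
    and "\<forall>i<n. 0 \<le> ov i"
  shows "gfix_obj D n k ov \<ge> ennreal (1 - \<epsilon>) * opt_obj D n k ov"
proof -
  define P where "P = prof_dist D n"
  have spD: "space D = UNIV" using sets_eq_imp_space_eq[OF assms(2)] by simp
  have spP: "space P = PiE {..<n} (\<lambda>_. UNIV)"
    unfolding P_def prof_dist_def by (simp add: space_PiM spD)
  interpret PP: product_prob_space "\<lambda>_. D" "{..<n}"
    by (simp add: product_prob_space_def product_prob_space_axioms_def product_sigma_finite_def
        prob_space_imp_sigma_finite assms(1))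
  have AE0: "AE a in P. \<forall>i\<in>{..<n}. 0 \<le> a i"
    unfolding P_def prof_dist_def
    by (intro AE_finite_allI) (auto intro!: PP.AE_component assms(3))
  obtain T where T: "T \<subseteq> {..<n}" "card T = k" "\<forall>t\<in>T. \<forall>u\<in>{..<n}-T. ov u \<le> ov t"
    using top_set[OF assms(5)] by blast
  have finI: "finite {I. I \<subseteq> {..<n} \<and> card I \<le> k}" by (rule finite_subset[of _ "Pow {..<n}"]) auto
  have gfix: "fix_obj D n k ov T \<le> gfix_obj D n k ov"
  proof -
    have "{fix_obj D n k ov I | I. I \<subseteq> {..<n} \<and> card I \<le> k} = fix_obj D n k ov ` {I. I \<subseteq> {..<n} \<and> card I \<le> k}"
      by auto
    then have "finite {fix_obj D n k ov I | I. I \<subseteq> {..<n} \<and> card I \<le> k}" using finI by simp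
    then show ?thesis unfolding gfix_obj_def by (rule Max_ge) (use T in auto)
  qed
  define V where "V x y a = (\<Sum>i<n. (if x a i then a i else 0) + (if y a i then ov i else 0))"
    for x y :: "(nat \<Rightarrow> real) \<Rightarrow> nat \<Rightarrow> bool" and a :: "nat \<Rightarrow> real"
  have mech: "ennreal (1 - \<epsilon>) * mech_obj D n ov x y \<le> fix_obj D n k ov T"
    if feas: "feasible_mech n k x y" for x y
  proof (cases "k = 0")
    case True
    have "mech_obj D n ov x y = (\<integral>\<^sup>+ a. 0 \<partial>P)"
      unfolding mech_obj_def P_def[symmetric]
    proof (rule nn_integral_cong)
      fix a assume a: "a \<in> space P"
      then have "(\<Sum>i<n. of_bool (x a i) + of_bool (y a i)) \<le> (0::nat)"
        using feas True unfolding feasible_mech_def spP by blast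
      then have "\<forall>i<n. \<not> x a i \<and> \<not> y a i" by auto
      then show "ennreal (\<Sum>i<n. (if x a i then a i else 0) + (if y a i then ov i else 0)) = 0"
        by simp
    qed
    then show ?thesis by simp
  next
    case False
    then have kpos: "k > 0" by simp
    define m where "m = n div k"
    have mk: "m * k \<le> n" unfolding m_def by (simp add: div_times_less_eq_dividend)
    have nlt: "n < (m + 1) * k" unfolding m_def using kpos
      by (metis add.commute div_mult_mod_eq mod_less_divisor mult.commute mult_Suc_right nat_add_left_cancel_less plus_1_eq_Suc)
    have em: "\<epsilon> * real m > 1"
    proof -
      have "real n < (real m + 1) * real k" using nlt by (metis of_nat_1 of_nat_add of_nat_less_iff of_nat_mult)
      then have "(real k)^2 / \<epsilon> < real m * real k" using assms(8) by (simp add: algebra_simps)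
      then have "real k * (real k / \<epsilon>) < real k * real m" by (simp add: power2_eq_square algebra_simps)
      then have "real k / \<epsilon> < real m" using kpos by (metis mult_less_cancel_left_pos of_nat_0_less_iff)
      then have "real k < real m * \<epsilon>" using assms(6) by (simp add: divide_less_eq)
      moreover have "1 \<le> real k" using kpos by simp
      ultimately show ?thesis by (simp add: mult.commute)
    qed
    have mpos: "real m > 0" using em assms(6) by (metis mult_zero_right not_less of_nat_0_le_iff order.strict_trans2 zero_less_one order_le_less)
    define R where "R r = {r*k..<r*k+k}" for r
    have Rsub: "R r \<subseteq> {..<n}" if "r < m" for r
    proof -
      have "r * k + k \<le> m * k" using that by (metis add.commute mult_Suc mult_le_mono1 Suc_leI)
      then show ?thesis using mk unfolding R_def by auto
    qed
    have cR: "card (R r) = k" for r unfolding R_def by simp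
    have Rdisj: "R r \<inter> R r' = {}" if "r \<noteq> r'" for r r'
      using blk[OF kpos, of _ r] blk[OF kpos, of _ r'] that unfolding R_def by blast
    have "\<forall>r\<in>{..<m}. \<exists>s. bij_betw s {..<n} {..<n} \<and> (\<forall>t\<in>T. s t \<in> R r)"
    proof
      fix r assume r: "r \<in> {..<m}"
      have fT: "finite T" using T(1) finite_subset by blast
      obtain f where f: "bij_betw f T (R r)"
        using finite_same_card_bij[OF fT, of "R r"] cR[of r] T(2) unfolding R_def by auto
      have "card ({..<n} - T) = card ({..<n} - R r)"
        using T Rsub[of r] r cR by (simp add: card_Diff_subset finite_subset)
      then obtain g where g: "bij_betw g ({..<n} - T) ({..<n} - R r)"
        using finite_same_card_bij[of "{..<n} - T" "{..<n} - R r"] by auto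
      define s where "s i = (if i \<in> T then f i else g i)" for i
      have "bij_betw s T (R r) = bij_betw f T (R r)" by (rule bij_betw_cong) (simp add: s_def)
      with f have bs1: "bij_betw s T (R r)" by simp
      have "bij_betw s ({..<n} - T) ({..<n} - R r) = bij_betw g ({..<n} - T) ({..<n} - R r)"
        by (rule bij_betw_cong) (simp add: s_def)
      with g have bs2: "bij_betw s ({..<n} - T) ({..<n} - R r)" by simp
      have "R r \<inter> ({..<n} - R r) = {}" by (rule Diff_disjoint)
      with bs1 bs2 have "bij_betw s (T \<union> ({..<n} - T)) (R r \<union> ({..<n} - R r))"
        by (rule bij_betw_combine)
      moreover have "T \<union> ({..<n} - T) = {..<n}" using T(1) by blast
      moreover have "R r \<union> ({..<n} - R r) = {..<n}" using Rsub[of r] r by blast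
      ultimately have "bij_betw s {..<n} {..<n}" by simp
      moreover have "\<forall>t\<in>T. s t \<in> R r" using f unfolding s_def bij_betw_def by auto
      ultimately show "\<exists>s. bij_betw s {..<n} {..<n} \<and> (\<forall>t\<in>T. s t \<in> R r)" by blast
    qed
    then obtain \<sigma>0 where \<sigma>0: "\<forall>r\<in>{..<m}. bij_betw (\<sigma>0 r) {..<n} {..<n} \<and> (\<forall>t\<in>T. \<sigma>0 r t \<in> R r)"
      by (rule bchoice[elim_format]) blast
    obtain \<sigma> where \<sigma>: "\<And>r. r < m \<Longrightarrow> bij_betw (\<sigma> r) {..<n} {..<n}"
      "\<And>r t. r < m \<Longrightarrow> t \<in> T \<Longrightarrow> \<sigma> r t \<in> R r"
      using \<sigma>0 by auto
    define \<tau> where "\<tau> r a = (\<lambda>j\<in>{..<n}. a (\<sigma> r j))" for r and a :: "nat \<Rightarrow> real"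
    define h where "h a i = (if i \<in> T then ov i else a i)" for a :: "nat \<Rightarrow> real" and i
    define SS where "SS = {S. S \<subseteq> {..<n} \<and> card S \<le> k}"
    define G where "G a = Max ((\<lambda>S. \<Sum>i\<in>S. h a i) ` SS)" for a
    have finSS: "finite SS" unfolding SS_def using finI .
    have neSS: "{} \<in> SS" unfolding SS_def by simp
    have Gge: "(\<Sum>i\<in>S. h a i) \<le> G a" if "S \<in> SS" for S a
      unfolding G_def using finSS that by (intro Max_ge) auto
    have G0: "0 \<le> G a" for a using Gge[OF neSS, of a] by simp
    have mPD: "measurable P borel = measurable P D" by (rule measurable_cong_sets) (simp_all add: assms(2))
    have comp: "(\<lambda>a. a i) \<in> measurable P D" if "i < n" for i
      unfolding P_def prof_dist_def using that by (intro measurable_component_singleton) auto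
    have hmeas: "(\<lambda>a. h a i) \<in> borel_measurable P" if "i < n" for i
      unfolding h_def mPD using comp[OF that] by (cases "i \<in> T") (simp_all add: mPD[symmetric])
    have Gmeas: "G \<in> borel_measurable P"
    proof -
      have "(\<lambda>a. Max ((\<lambda>S. (\<lambda>S a. \<Sum>i\<in>S. h a i) S a) ` SS)) \<in> borel_measurable P"
      proof (rule borel_measurable_Max[OF finSS])
        fix S assume "S \<in> SS"
        then have "S \<subseteq> {..<n}" unfolding SS_def by simp
        then show "(\<lambda>a. \<Sum>i\<in>S. h a i) \<in> borel_measurable P"
          using hmeas by (intro borel_measurable_sum) auto
      qed
      then show ?thesis unfolding G_def by simp
    qed
    have Gmeas': "(\<lambda>a. ennreal (G a)) \<in> borel_measurable P" using Gmeas by simp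
    have \<tau>meas: "\<tau> r \<in> measurable P P" if "r < m" for r
    proof -
      have "\<sigma> r j < n" if "j < n" for j using \<sigma>(1)[OF \<open>r < m\<close>] that by (auto dest: bij_betwE)
      then show ?thesis unfolding \<tau>_def
        by (subst (2) P_def, subst prof_dist_def, intro measurable_restrict) (auto intro: comp)
    qed
    have inv: "distr P P (\<tau> r) = P" if "r < m" for r
    proof -
      have "inj_on (\<sigma> r) {..<n}" using \<sigma>(1)[OF that] by (rule bij_betw_imp_inj_on)
      moreover have "\<sigma> r \<in> {..<n} \<rightarrow> {..<n}" using \<sigma>(1)[OF that] by (rule bij_betw_imp_funcset)
      ultimately show ?thesis
        using distr_PiM_reindex[of "{..<n}" "\<lambda>_. D" "\<sigma> r" "{..<n}"] assms(1)
        unfolding P_def prof_dist_def \<tau>_def by simp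
    qed
    have intG: "(\<integral>\<^sup>+a. ennreal (G (\<tau> r a)) \<partial>P) = (\<integral>\<^sup>+a. ennreal (G a) \<partial>P)" if "r < m" for r
    proof -
      have "(\<integral>\<^sup>+a. ennreal (G a) \<partial>P) = (\<integral>\<^sup>+a. ennreal (G a) \<partial>(distr P P (\<tau> r)))"
        by (simp add: inv[OF that])
      also have "\<dots> = (\<integral>\<^sup>+a. ennreal (G (\<tau> r a)) \<partial>P)"
        by (rule nn_integral_distr[OF \<tau>meas[OF that]]) (simp add: inv[OF that] Gmeas')
      finally show ?thesis by simp
    qed
    have intF: "(\<integral>\<^sup>+a. ennreal (G a) \<partial>P) \<le> fix_obj D n k ov T"
      unfolding fix_obj_def P_def[symmetric]
    proof (rule nn_integral_mono_AE)
      show "AE a in P. ennreal (G a) \<le> ennreal (max_k k (image_mset (\<lambda>i. if i \<in> T then ov i else a i) (mset_set {..<n})))"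
        using AE0
      proof eventually_elim
        case (elim a)
        have "G a \<le> max_k k (image_mset (h a) (mset_set {..<n}))"
          unfolding G_def
        proof (subst Max_le_iff)
          show "finite ((\<lambda>S. \<Sum>i\<in>S. h a i) ` SS)" using finSS by simp
          show "(\<lambda>S. \<Sum>i\<in>S. h a i) ` SS \<noteq> {}" using neSS by auto
          show "\<forall>v\<in>(\<lambda>S. \<Sum>i\<in>S. h a i) ` SS. v \<le> max_k k (image_mset (h a) (mset_set {..<n}))"
          proof
            fix v assume "v \<in> (\<lambda>S. \<Sum>i\<in>S. h a i) ` SS"
            then obtain S where S: "S \<in> SS" "v = (\<Sum>i\<in>S. h a i)" by blast
            have "\<forall>i\<in>{..<n}. 0 \<le> h a i" using elim assms(9) unfolding h_def by auto
            then show "v \<le> max_k k (image_mset (h a) (mset_set {..<n}))"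
              using S max_k_ge[of "{..<n}" S k "h a"] unfolding SS_def by auto
          qed
        qed
        then show ?case unfolding h_def by (intro ennreal_leI) simp
      qed
    qed
    define C where "C = 1 / (1 - \<epsilon>)"
    have Cpos: "C > 0" unfolding C_def using assms(7) by simp
    have fac: "(C / real m) * (real m - 1) \<ge> 1"
    proof -
      have "(1 - \<epsilon>) * real m \<le> real m - 1" using em by (simp add: algebra_simps)
      then have "real m \<le> C * (real m - 1)" unfolding C_def using assms(7)
        by (simp add: field_simps)
      then show ?thesis using mpos by (simp add: field_simps)
    qed
    have pw: "AE a in P. ennreal (V x y a) \<le> ennreal (C / real m) * (\<Sum>r<m. ennreal (G (\<tau> r a)))"
      using AE0 AE_space
    proof eventually_elim
      case (elim a)
      then have a0: "\<forall>i<n. 0 \<le> a i" and asp: "a \<in> PiE {..<n} (\<lambda>_. UNIV)" using spP by auto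
      define X where "X = {i\<in>{..<n}. x a i}"
      define Y where "Y = {i\<in>{..<n}. y a i}"
      have fX: "finite X" and fY: "finite Y" unfolding X_def Y_def by auto
      have "(\<Sum>i<n. of_bool (x a i) + of_bool (y a i)) \<le> k"
        using bspec[OF feas[unfolded feasible_mech_def] asp] by (rule conjunct1)
      moreover have "(\<Sum>i<n. of_bool (x a i) + of_bool (y a i)) = card X + card Y"
        unfolding X_def Y_def sum.distrib by (simp add: Int_def)
      ultimately have cXY: "card X + card Y \<le> k" by simp
      have sX: "sum a X = (\<Sum>i<n. if x a i then a i else 0)"
        unfolding X_def by (rule sum.inter_filter) simp
      have sY: "sum ov Y = (\<Sum>i<n. if y a i then ov i else 0)"
        unfolding Y_def by (rule sum.inter_filter) simp
      have VXY: "V x y a = sum a X + sum ov Y"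
        unfolding V_def sum.distrib sX sY ..
      have YT: "Y \<subseteq> {..<n}" "card Y \<le> k" using cXY unfolding Y_def by auto
      obtain Y' where Y': "Y' \<subseteq> T" "card Y' \<le> card Y" "sum ov Y \<le> sum ov Y'"
        using exch[OF T YT refl] by blast
      have lower: "sum a (X - R r) + sum ov Y \<le> G (\<tau> r a)" if r: "r < m" for r
      proof -
        define A where "A = {i\<in>{..<n}. \<sigma> r i \<in> X - R r}"
        have bij: "bij_betw (\<sigma> r) {..<n} {..<n}" using \<sigma>(1)[OF r] .
        have inj: "inj_on (\<sigma> r) A" using bij_betw_imp_inj_on[OF bij] unfolding A_def
          by (rule inj_on_subset) auto
        have img: "\<sigma> r ` A = X - R r"
        proof
          show "\<sigma> r ` A \<subseteq> X - R r" unfolding A_def by auto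
          show "X - R r \<subseteq> \<sigma> r ` A"
          proof
            fix z assume z: "z \<in> X - R r"
            then have "z \<in> {..<n}" unfolding X_def by auto
            then have "z \<in> \<sigma> r ` {..<n}" using bij_betw_imp_surj_on[OF bij] by simp
            then obtain i where "i \<in> {..<n}" "\<sigma> r i = z" by blast
            then show "z \<in> \<sigma> r ` A" using z unfolding A_def by auto
          qed
        qed
        have AT: "A \<inter> T = {}"
        proof (rule ccontr)
          assume "A \<inter> T \<noteq> {}"
          then obtain i where "i \<in> A" "i \<in> T" by blast
          then show False using \<sigma>(2)[OF r, of i] unfolding A_def by simp
        qed
        have fA: "finite A" unfolding A_def by auto
        have fT: "finite T" using T(1) by (rule finite_subset) simp
        have fY': "finite Y'" using Y'(1) fT by (rule finite_subset)
        have cA: "card A \<le> card X"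
        proof -
          have "card A = card (X - R r)" using card_image[OF inj] img by simp
          also have "\<dots> \<le> card X" using fX by (simp add: card_mono)
          finally show ?thesis .
        qed
        define S where "S = A \<union> Y'"
        have SS: "S \<in> SS" unfolding SS_def S_def
        proof (intro CollectI conjI)
          show "A \<union> Y' \<subseteq> {..<n}" using Y'(1) T(1) unfolding A_def by auto
          have "card (A \<union> Y') \<le> card A + card Y'" by (rule card_Un_le)
          then show "card (A \<union> Y') \<le> k" using cA Y'(2) cXY by simp
        qed
        have "(\<Sum>i\<in>S. h (\<tau> r a) i) = (\<Sum>i\<in>A. h (\<tau> r a) i) + (\<Sum>i\<in>Y'. h (\<tau> r a) i)"
          unfolding S_def using AT Y'(1) fA fY' by (intro sum.union_disjoint) auto
        also have "(\<Sum>i\<in>A. h (\<tau> r a) i) = (\<Sum>i\<in>A. a (\<sigma> r i))"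
          using AT unfolding h_def \<tau>_def A_def by (intro sum.cong) auto
        also have "\<dots> = sum a (X - R r)"
          using sum.reindex[OF inj, of a] img by simp
        also have "(\<Sum>i\<in>Y'. h (\<tau> r a) i) = sum ov Y'"
          using Y'(1) unfolding h_def by (intro sum.cong) auto
        finally have "sum a (X - R r) + sum ov Y' = (\<Sum>i\<in>S. h (\<tau> r a) i)" by simp
        also have "\<dots> \<le> G (\<tau> r a)" by (rule Gge[OF SS])
        finally show ?thesis using Y'(3) by simp
      qed
      have aX0: "0 \<le> a i" if "i \<in> X" for i using a0 that unfolding X_def by auto
      have oY0: "0 \<le> sum ov Y" using assms(9) unfolding Y_def by (intro sum_nonneg) auto
      have split: "sum a (X - R r) = sum a X - sum a (X \<inter> R r)" for r
        using sum.Int_Diff[OF fX, of a "R r"] by simp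
      have "(\<Sum>r<m. sum a (X \<inter> R r)) = sum a (\<Union>r\<in>{..<m}. X \<inter> R r)"
        using fX Rdisj by (intro sum.UNION_disjoint[symmetric]) auto
      also have "\<dots> \<le> sum a X" using fX aX0 by (intro sum_mono2) auto
      finally have disj: "(\<Sum>r<m. sum a (X \<inter> R r)) \<le> sum a X" .
      have "(\<Sum>r<m. sum a (X - R r) + sum ov Y) = real m * (sum a X + sum ov Y) - (\<Sum>r<m. sum a (X \<inter> R r))"
        unfolding split by (simp add: sum.distrib sum_subtractf algebra_simps)
      then have "(real m - 1) * V x y a \<le> (\<Sum>r<m. sum a (X - R r) + sum ov Y)"
        using disj oY0 VXY by (simp add: algebra_simps)
      also have "\<dots> \<le> (\<Sum>r<m. G (\<tau> r a))" by (intro sum_mono lower) simp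
      finally have main: "(real m - 1) * V x y a \<le> (\<Sum>r<m. G (\<tau> r a))" .
      have V0: "0 \<le> V x y a" using VXY oY0 aX0 sum_nonneg[of X a] by simp
      have "V x y a \<le> (C / real m) * (real m - 1) * V x y a"
        using mult_right_mono[OF fac V0] by simp
      also have "\<dots> \<le> (C / real m) * (\<Sum>r<m. G (\<tau> r a))"
      proof -
        have "0 \<le> C / real m" using Cpos mpos by simp
        from mult_left_mono[OF main this] show ?thesis by (simp only: mult.assoc)
      qed
      finally have "ennreal (V x y a) \<le> ennreal ((C / real m) * (\<Sum>r<m. G (\<tau> r a)))"
        by (rule ennreal_leI)
      also have "\<dots> = ennreal (C / real m) * (\<Sum>r<m. ennreal (G (\<tau> r a)))"
      proof -
        have "0 \<le> C / real m" using Cpos mpos by simp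
        moreover have "0 \<le> (\<Sum>r<m. G (\<tau> r a))" using G0 by (simp add: sum_nonneg)
        ultimately have "ennreal ((C / real m) * (\<Sum>r<m. G (\<tau> r a))) = ennreal (C / real m) * ennreal (\<Sum>r<m. G (\<tau> r a))"
          by (rule ennreal_mult)
        also have "ennreal (\<Sum>r<m. G (\<tau> r a)) = (\<Sum>r<m. ennreal (G (\<tau> r a)))"
          using G0 by (simp add: sum_ennreal)
        finally show ?thesis .
      qed
      finally show ?case .
    qed
    have Gtm: "(\<lambda>a. ennreal (G (\<tau> r a))) \<in> borel_measurable P" if "r < m" for r
      by (rule measurable_compose[OF \<tau>meas[OF that] Gmeas'])
    have Gtm: "(\<lambda>a. ennreal (G (\<tau> r a))) \<in> borel_measurable P" if "r < m" for r
      by (rule measurable_compose[OF \<tau>meas[OF that] Gmeas'])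
    have "mech_obj D n ov x y = (\<integral>\<^sup>+a. ennreal (V x y a) \<partial>P)"
      unfolding mech_obj_def V_def P_def ..
    also have "\<dots> \<le> (\<integral>\<^sup>+a. ennreal (C / real m) * (\<Sum>r<m. ennreal (G (\<tau> r a))) \<partial>P)"
      by (rule nn_integral_mono_AE[OF pw])
    also have "\<dots> = ennreal (C / real m) * (\<integral>\<^sup>+a. (\<Sum>r<m. ennreal (G (\<tau> r a))) \<partial>P)"
      using Gtm by (intro nn_integral_cmult borel_measurable_sum) simp
    also have "(\<integral>\<^sup>+a. (\<Sum>r<m. ennreal (G (\<tau> r a))) \<partial>P) = (\<Sum>r<m. (\<integral>\<^sup>+a. ennreal (G (\<tau> r a)) \<partial>P))"
      using Gtm by (intro nn_integral_sum) simp
    also have "\<dots> = (\<Sum>r<m. (\<integral>\<^sup>+a. ennreal (G a) \<partial>P))" by (intro sum.cong refl intG) simp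
    also have "\<dots> = of_nat m * (\<integral>\<^sup>+a. ennreal (G a) \<partial>P)" by simp
    finally have mb: "mech_obj D n ov x y \<le> ennreal (C / real m) * (of_nat m * (\<integral>\<^sup>+a. ennreal (G a) \<partial>P))" .
    have e1: "ennreal (C / real m) * ennreal (real m) = ennreal C"
    proof -
      have "ennreal (C / real m) * ennreal (real m) = ennreal (C / real m * real m)"
        by (rule ennreal_mult[symmetric]) (use Cpos mpos in simp)+
      also have "C / real m * real m = C" using mpos by simp
      finally show ?thesis .
    qed
    have e2: "ennreal (1 - \<epsilon>) * ennreal C = 1"
    proof -
      have "ennreal (1 - \<epsilon>) * ennreal C = ennreal ((1 - \<epsilon>) * C)"
        by (rule ennreal_mult[symmetric]) (use Cpos assms(7) in simp)+
      also have "(1 - \<epsilon>) * C = 1" unfolding C_def using assms(7) by simp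
      finally show ?thesis by simp
    qed
    have "ennreal (1 - \<epsilon>) * mech_obj D n ov x y \<le> ennreal (1 - \<epsilon>) * (ennreal (C / real m) * (of_nat m * (\<integral>\<^sup>+a. ennreal (G a) \<partial>P)))"
      by (rule mult_left_mono[OF mb]) simp
    also have "\<dots> = (ennreal (1 - \<epsilon>) * (ennreal (C / real m) * ennreal (real m))) * (\<integral>\<^sup>+a. ennreal (G a) \<partial>P)"
      by (simp only: ennreal_of_nat_eq_real_of_nat mult.assoc)
    also have "\<dots> = (\<integral>\<^sup>+a. ennreal (G a) \<partial>P)" by (simp only: e1 e2 mult_1)
    finally have "ennreal (1 - \<epsilon>) * mech_obj D n ov x y \<le> (\<integral>\<^sup>+a. ennreal (G a) \<partial>P)" .
    then show ?thesis using intF by simp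
  qed
  have "ennreal (1 - \<epsilon>) * opt_obj D n k ov \<le> fix_obj D n k ov T"
    unfolding opt_obj_def SUP_mult_left_ennreal
    by (rule SUP_least) (use mech in auto)
  then show ?thesis using gfix by simp
qed

end
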